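(* The north pole (resp. south pole) of the shape sphere $M^\ast$, i.e. the geometric center of the hemisphere $M^\ast_+$ of positively oriented shapes (resp. $M^\ast_-$ of negatively oriented shapes), is the shape of the positively (resp. negatively) oriented m-triangle with $I=1$ whose individual moments of inertia equal the dual masses: $I_j=\frac12(1-m_j)$, $j=1,2,3$.
   Context: Masses $m_1,m_2,m_3>0$, $m_1+m_2+m_3=1$; m-triangles $(\mathbf a_1,\mathbf a_2,\mathbf a_3)$, $\mathbf a_i\in\mathbb R^3$, $\sum m_i\mathbf a_i=0$, with $I_j=m_j|\mathbf a_j|^2$ and $I=\sum I_j$. Oriented m-triangles carry a unit normal $\mathbf n$; a nondegenerate one is positively oriented if $(\mathbf a_1,\mathbf a_2,\mathbf n)$ is right-handed. The shape space $M^\ast$ (oriented m-triangles with $I=1$ modulo rotation), with the kinematic metric induced from $\sum m_i|d\mathbf a_i|^2$ via lifts of zero angular momentum, is a round sphere of radius $1/2$, divided by the equator of collinear shapes into the closed hemispheres $M^\ast_\pm$ of positively and negatively oriented shapes. *)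

theory Defs
  imports "HOL-Analysis.Analysis" "HOL-Analysis.Cross3"
begin

definition admissible_masses :: "(nat \<Rightarrow> real) \<Rightarrow> bool" where
  "admissible_masses m \<longleftrightarrow> (\<forall>j\<in>{1..3}. m j > 0) \<and> (\<Sum>j\<in>{1..3}. m j) = 1"

definition m_triangle :: "(nat \<Rightarrow> real) \<Rightarrow> (nat \<Rightarrow> real^3) \<Rightarrow> bool" where
  "m_triangle m a \<longleftrightarrow> (\<Sum>j\<in>{1..3}. m j *\<^sub>R a j) = 0"

definition moment :: "(nat \<Rightarrow> real) \<Rightarrow> (nat \<Rightarrow> real^3) \<Rightarrow> nat \<Rightarrow> real" where
  "moment m a j = m j * (norm (a j))^2"

definition total_moment :: "(nat \<Rightarrow> real) \<Rightarrow> (nat \<Rightarrow> real^3) \<Rightarrow> real" where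
  "total_moment m a = (\<Sum>j\<in>{1..3}. moment m a j)"

definition oriented_m_triangle :: "(nat \<Rightarrow> real) \<Rightarrow> (nat \<Rightarrow> real^3) \<Rightarrow> real^3 \<Rightarrow> bool" where
  "oriented_m_triangle m a n \<longleftrightarrow> m_triangle m a \<and> norm n = 1 \<and> (\<forall>j\<in>{1..3}. a j \<bullet> n = 0)"

text \<open>Positively / negatively oriented: (a1,a2,n) right- / left-handed (implies nondegenerate).\<close>
definition pos_oriented :: "(nat \<Rightarrow> real) \<Rightarrow> (nat \<Rightarrow> real^3) \<Rightarrow> real^3 \<Rightarrow> bool" where
  "pos_oriented m a n \<longleftrightarrow> oriented_m_triangle m a n \<and> (cross3 (a 1) (a 2)) \<bullet> n > 0"

definition neg_oriented :: "(nat \<Rightarrow> real) \<Rightarrow> (nat \<Rightarrow> real^3) \<Rightarrow> real^3 \<Rightarrow> bool" where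
  "neg_oriented m a n \<longleftrightarrow> oriented_m_triangle m a n \<and> (cross3 (a 1) (a 2)) \<bullet> n < 0"

definition collinear_m_triangle :: "(nat \<Rightarrow> real) \<Rightarrow> (nat \<Rightarrow> real^3) \<Rightarrow> bool" where
  "collinear_m_triangle m a \<longleftrightarrow> m_triangle m a \<and> (\<exists>u. \<forall>j\<in>{1..3}. \<exists>t. a j = t *\<^sub>R u)"

definition rotations :: "(real^3^3) set" where
  "rotations = {R. orthogonal_matrix R \<and> det R = 1}"

text \<open>Kinematic distance in shape space between (shapes of) m-triangles with I = 1:
  the quotient by rotations of the great-circle distance on the unit sphere
  I = 1 for the mass inner product.\<close>
definition shape_dist :: "(nat \<Rightarrow> real) \<Rightarrow> (nat \<Rightarrow> real^3) \<Rightarrow> (nat \<Rightarrow> real^3) \<Rightarrow> real" where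
  "shape_dist m a b =
     arccos (SUP R\<in>rotations. (\<Sum>j\<in>{1..3}. m j * (a j \<bullet> (R *v b j))))"

text \<open>The shape of an oriented m-triangle with I = 1 is the geometric centre of its
  (closed) hemisphere iff it lies at distance pi/4 (a quarter great circle of the
  sphere of radius 1/2) from every shape on the equator of collinear shapes.\<close>
definition hemisphere_center :: "(nat \<Rightarrow> real) \<Rightarrow> (nat \<Rightarrow> real^3) \<Rightarrow> bool" where
  "hemisphere_center m a \<longleftrightarrow> total_moment m a = 1 \<and>
     (\<forall>b. collinear_m_triangle m b \<and> total_moment m b = 1 \<longrightarrow> shape_dist m a b = pi / 4)"

end

theory Submission
  imports Defs
begin

lemma sum3: "(\<Sum>j\<in>{1..3::nat}. f j) = f 1 + f 2 + f 3"
proof -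
  have "{1..3::nat} = {1,2,3}" by auto
  then show ?thesis by (simp add: add.assoc)
qed

lemma rot_norm: assumes "R \<in> rotations" shows "norm (R *v u) = norm u"
proof -
  have "orthogonal_transformation (\<lambda>x. R *v x)"
    using assms by (simp add: rotations_def orthogonal_transformation_matrix)
  then show ?thesis by (simp add: orthogonal_transformation_norm)
qed

lemma sup_rot: fixes v u :: "real^3"
  shows "(SUP R\<in>rotations. v \<bullet> (R *v u)) = norm v * norm u"
  unfolding image_def
proof (rule cSup_eq_maximum)
  show "x \<le> norm v * norm u" if "x \<in> {y. \<exists>R\<in>rotations. y = v \<bullet> (R *v u)}" for x
  proof -
    from that 
    obtain R where R: "R \<in> rotations" "x = v \<bullet> (R *v u)" by auto
    have "x \<le> norm v * norm (R *v u)" using R(2) Cauchy_Schwarz_ineq2 by (metis abs_le_iff)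
    then show "x \<le> norm v * norm u" using rot_norm[OF R(1)] by simp
  qed
  show "norm v * norm u \<in> {y. \<exists>R\<in>rotations. y = v \<bullet> (R *v u)}"
  proof (cases "v = 0")
    case True
    have "mat 1 \<in> rotations" by (simp add: rotations_def orthogonal_matrix_id)
    then show ?thesis using True by force
  next
    case False
    have "norm u = norm ((norm u / norm v) *\<^sub>R v)" using False by simp
    then obtain f where f: "orthogonal_transformation f" "det (matrix f) = 1"
        "f u = (norm u / norm v) *\<^sub>R v"
      using rotation_exists[of u "(norm u / norm v) *\<^sub>R v"] by auto
    have lin: "linear f" using f(1) orthogonal_transformation by blast
    have "matrix f \<in> rotations" using f(1,2) by (simp add: rotations_def orthogonal_transformation_matrix)
    moreover have "matrix f *v u = (norm u / norm v) *\<^sub>R v" using matrix_vector_mul(2)[OF lin] f(3) by metis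
    moreover have "v \<bullet> ((norm u / norm v) *\<^sub>R v) = norm v * norm u"
      using False by (simp add: power2_norm_eq_inner[symmetric] power2_eq_square)
    ultimately show ?thesis by force
  qed
qed

lemma nsq: fixes a1 a2 a3 :: "real^3"
  shows "(norm (x1 *\<^sub>R a1 + x2 *\<^sub>R a2 + x3 *\<^sub>R a3))\<^sup>2 =
    x1^2 * (a1 \<bullet> a1) + x2^2 * (a2 \<bullet> a2) + x3^2 * (a3 \<bullet> a3)
    + 2*x1*x2*(a1 \<bullet> a2) + 2*x1*x3*(a1 \<bullet> a3) + 2*x2*x3*(a2 \<bullet> a3)"
  unfolding power2_norm_eq_inner by (simp add: inner_add_left inner_add_right inner_commute[of a2 a1]
      inner_commute[of a3 a1] inner_commute[of a3 a2] algebra_simps power2_eq_square)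

lemma dist_coll:
  assumes "\<forall>j\<in>{1..3}. b j = t j *\<^sub>R u"
  shows "shape_dist m a b = arccos (norm ((m 1 * t 1) *\<^sub>R a 1 + (m 2 * t 2) *\<^sub>R a 2 + (m 3 * t 3) *\<^sub>R a 3) * norm u)"
proof -
  have "\<And>R. (\<Sum>j\<in>{1..3}. m j * (a j \<bullet> (R *v b j))) =
     ((m 1 * t 1) *\<^sub>R a 1 + (m 2 * t 2) *\<^sub>R a 2 + (m 3 * t 3) *\<^sub>R a 3) \<bullet> (R *v u)"
    using assms unfolding sum3 by (simp add: inner_add_left inner_scaleR_left matrix_vector_mult_scaleR algebra_simps)
  then show ?thesis unfolding shape_dist_def by (simp add: sup_rot)
qed

lemma adm3: "admissible_masses m \<Longrightarrow> m 1 > 0 \<and> m 2 > 0 \<and> m 3 > 0 \<and> m 1 + m 2 + m 3 = 1"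
  unfolding admissible_masses_def sum3 by auto

lemma tm3: "total_moment m a = m 1 * (a 1 \<bullet> a 1) + m 2 * (a 2 \<bullet> a 2) + m 3 * (a 3 \<bullet> a 3)"
  unfolding total_moment_def sum3 moment_def power2_norm_eq_inner by simp

lemma cs_bound:
  fixes a :: "nat \<Rightarrow> real^3"
  assumes adm: "admissible_masses m" and I: "total_moment m a = 1"
    and T: "m 1 * t1^2 + m 2 * t2^2 + m 3 * t3^2 = 1"
  shows "norm ((m 1 * t1) *\<^sub>R a 1 + (m 2 * t2) *\<^sub>R a 2 + (m 3 * t3) *\<^sub>R a 3) \<le> 1"
proof -
  have m: "m 1 > 0" "m 2 > 0" "m 3 > 0" using adm3[OF adm] by auto
  have b: "\<bar>m j * t\<bar> * norm (a j) \<le> m j * (t^2 + (norm (a j))^2) / 2" if "m j > 0" for j t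
  proof -
    have "\<bar>t\<bar> * norm (a j) \<le> (t^2 + (norm (a j))^2) / 2"
      using sum_squares_bound[of "\<bar>t\<bar>" "norm (a j)"] by (simp add: power2_abs)
    then show ?thesis using that by (simp add: abs_mult mult_left_mono mult.assoc)
  qed
  have "norm ((m 1 * t1) *\<^sub>R a 1 + (m 2 * t2) *\<^sub>R a 2 + (m 3 * t3) *\<^sub>R a 3)
     \<le> \<bar>m 1 * t1\<bar> * norm (a 1) + \<bar>m 2 * t2\<bar> * norm (a 2) + \<bar>m 3 * t3\<bar> * norm (a 3)"
    by (intro order.trans[OF norm_triangle_ineq] add_mono order.trans[OF norm_triangle_ineq]) auto
  also have "\<dots> \<le> (m 1 * t1^2 + m 2 * t2^2 + m 3 * t3^2 + total_moment m a) / 2"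
    using b[OF m(1), of t1] b[OF m(2), of t2] b[OF m(3), of t3]
    unfolding tm3 power2_norm_eq_inner by (simp add: algebra_simps)
  finally show ?thesis using T I by simp
qed

lemma center_val:
  fixes a :: "nat \<Rightarrow> real^3"
  assumes hc: "hemisphere_center m a" and adm: "admissible_masses m"
    and S: "m 1 * t1 + m 2 * t2 + m 3 * t3 = 0"
    and T: "m 1 * t1^2 + m 2 * t2^2 + m 3 * t3^2 = 1"
  shows "norm ((m 1 * t1) *\<^sub>R a 1 + (m 2 * t2) *\<^sub>R a 2 + (m 3 * t3) *\<^sub>R a 3) = sqrt 2 / 2"
proof -
  define t where "t = (\<lambda>j::nat. if j = 1 then t1 else if j = 2 then t2 else t3)"
  define e :: "real^3" where "e = axis 1 1"
  define b where "b = (\<lambda>j. t j *\<^sub>R e)"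
  have ne: "norm e = 1" unfolding e_def by simp
  have I: "total_moment m a = 1" using hc unfolding hemisphere_center_def by simp
  have "(\<Sum>j\<in>{1..3}. m j *\<^sub>R b j) = (m 1 * t1 + m 2 * t2 + m 3 * t3) *\<^sub>R e"
    unfolding sum3 b_def t_def by (simp add: scaleR_add_left)
  then have "m_triangle m b" unfolding m_triangle_def using S by simp
  moreover have "\<forall>j\<in>{1..3}. \<exists>s. b j = s *\<^sub>R e" unfolding b_def by blast
  ultimately have "collinear_m_triangle m b" unfolding collinear_m_triangle_def by blast
  moreover have "total_moment m b = 1"
    unfolding total_moment_def sum3 moment_def b_def using T ne by (simp add: t_def)
  ultimately have d: "shape_dist m a b = pi / 4" using hc unfolding hemisphere_center_def by blast
  have "shape_dist m a b = arccos (norm ((m 1 * t1) *\<^sub>R a 1 + (m 2 * t2) *\<^sub>R a 2 + (m 3 * t3) *\<^sub>R a 3))"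
    using dist_coll[of b t e m a] ne by (simp add: b_def t_def)
  then have "arccos (norm ((m 1 * t1) *\<^sub>R a 1 + (m 2 * t2) *\<^sub>R a 2 + (m 3 * t3) *\<^sub>R a 3)) = pi/4"
    using d by simp
  then have "cos (arccos (norm ((m 1 * t1) *\<^sub>R a 1 + (m 2 * t2) *\<^sub>R a 2 + (m 3 * t3) *\<^sub>R a 3))) = cos (pi/4)"
    by (rule arg_cong)
  then have "cos (arccos (norm ((m 1 * t1) *\<^sub>R a 1 + (m 2 * t2) *\<^sub>R a 2 + (m 3 * t3) *\<^sub>R a 3))) = sqrt 2 / 2"
    by (simp only: cos_45)
  moreover have "norm ((m 1 * t1) *\<^sub>R a 1 + (m 2 * t2) *\<^sub>R a 2 + (m 3 * t3) *\<^sub>R a 3) \<le> 1"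
    using cs_bound[OF adm I T] .
  moreover have "-1 \<le> norm ((m 1 * t1) *\<^sub>R a 1 + (m 2 * t2) *\<^sub>R a 2 + (m 3 * t3) *\<^sub>R a 3)"
    by (rule order.trans[OF _ norm_ge_zero]) simp
  ultimately show ?thesis using cos_arccos by metis
qed

lemma cfacts:
  fixes x y c :: real assumes "x > 0" "y > 0"
  shows "x * (c/x)^2 + y * (-c/y)^2 = c^2 * (1/x + 1/y)"
  using assms by (simp add: power2_eq_square field_simps)

lemma solve_g:
  fixes x y z g :: real
  assumes "x > 0" "y > 0" "z > 0" "x + y + z = 1"
    and "g = y * ((1/x + 1/y)/2) + z * ((1/x + 1/z)/2) - 1"
  shows "x * g = (1 - x)/2"
proof -
  have "y * ((1/x + 1/y)/2) = y/(2*x) + 1/2" using assms by (simp add: field_simps)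
  moreover have "z * ((1/x + 1/z)/2) = z/(2*x) + 1/2" using assms by (simp add: field_simps)
  ultimately have "g = (y + z)/(2*x)" using assms(5) by (simp add: add_divide_distrib)
  then have "x * g = (y + z)/2" using assms(1) by simp
  then show ?thesis using assms(4) by simp
qed

lemma sqrt_half: "x \<ge> 0 \<Longrightarrow> x^2 = 1/2 \<Longrightarrow> x = sqrt 2 / (2::real)"
proof -
  assume "x \<ge> 0" "x^2 = 1/2"
  moreover have "(sqrt 2 / 2)^2 = (1/2::real)" by (simp add: power_divide)
  ultimately show ?thesis by (metis power2_eq_iff_nonneg real_sqrt_ge_zero divide_nonneg_nonneg zero_le_numeral)
qed

lemma edge:
  fixes p q r :: "real^3"
  assumes "x > 0" "y > 0"
    and h: "\<And>c. x * (c/x)^2 + y * (-c/y)^2 = 1 \<Longrightarrow> norm ((x * (c/x)) *\<^sub>R p + (y * (-c/y)) *\<^sub>R q + (z * 0) *\<^sub>R r) = sqrt 2 / 2"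
  shows "p \<bullet> p - 2 * (p \<bullet> q) + q \<bullet> q = (1/x + 1/y) / 2"
proof -
  define c where "c = 1 / sqrt (1/x + 1/y)"
  have p: "1/x + 1/y > 0" using assms by (intro add_pos_pos) auto
  have c2: "c^2 = 1 / (1/x + 1/y)" unfolding c_def using p by (simp add: power_divide)
  have cf: "x * (c/x)^2 + y * (-c/y)^2 = 1" "c^2 = 1 / (1/x + 1/y)"
    using cfacts[OF assms(1,2), of c] c2 p by simp_all
  have n: "norm ((x * (c/x)) *\<^sub>R p + (y * (-c/y)) *\<^sub>R q + (z * 0) *\<^sub>R r) = sqrt 2 / 2"
    using h cf(1) by blast
  have "(norm ((x * (c/x)) *\<^sub>R p + (y * (-c/y)) *\<^sub>R q + (z * 0) *\<^sub>R r))^2 = 1/2"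
    unfolding n by (simp add: power_divide)
  then have "c^2 * (p \<bullet> p - 2 * (p \<bullet> q) + q \<bullet> q) = 1/2"
    unfolding nsq using assms(1,2) by (simp add: power2_eq_square algebra_simps)
  then show ?thesis using cf(2) assms(1,2) by (simp add: field_simps)
qed

lemma center_iff:
  fixes a :: "nat \<Rightarrow> real^3"
  assumes adm: "admissible_masses m" and mt: "m_triangle m a" and I: "total_moment m a = 1"
  shows "hemisphere_center m a \<longleftrightarrow> (\<forall>j\<in>{1..3}. moment m a j = (1 - m j)/2)"
proof -
  have m: "m 1 > 0" "m 2 > 0" "m 3 > 0" "m 1 + m 2 + m 3 = 1" using adm3[OF adm] by auto
  define g11 where "g11 = a 1 \<bullet> a 1"
  define g22 where "g22 = a 2 \<bullet> a 2"
  define g33 where "g33 = a 3 \<bullet> a 3"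
  define g12 where "g12 = a 1 \<bullet> a 2"
  define g13 where "g13 = a 1 \<bullet> a 3"
  define g23 where "g23 = a 2 \<bullet> a 3"
  have E: "m 1 *\<^sub>R a 1 + m 2 *\<^sub>R a 2 + m 3 *\<^sub>R a 3 = 0" using mt unfolding m_triangle_def sum3 .
  have E1: "m 1 * g11 + m 2 * g12 + m 3 * g13 = 0"
    using arg_cong[OF E, of "\<lambda>x. a 1 \<bullet> x"] unfolding g11_def g12_def g13_def
    by (simp add: inner_add_right)
  have E2: "m 1 * g12 + m 2 * g22 + m 3 * g23 = 0"
    using arg_cong[OF E, of "\<lambda>x. a 2 \<bullet> x"] unfolding g22_def g12_def g23_def
    by (simp add: inner_add_right inner_commute[of "a 2" "a (Suc 0)"])
  have E3: "m 1 * g13 + m 2 * g23 + m 3 * g33 = 0"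
    using arg_cong[OF E, of "\<lambda>x. a 3 \<bullet> x"] unfolding g33_def g13_def g23_def
    by (simp add: inner_add_right inner_commute[of "a 3" "a (Suc 0)"] inner_commute[of "a 3" "a 2"])
  have Iq: "m 1 * g11 + m 2 * g22 + m 3 * g33 = 1" using I unfolding tm3 g11_def g22_def g33_def .
  have set3: "{1..3::nat} = {1,2,3}" by auto
  have momeq: "(\<forall>j\<in>{1..3}. moment m a j = (1 - m j)/2) \<longleftrightarrow>
     m 1 * g11 = (1 - m 1)/2 \<and> m 2 * g22 = (1 - m 2)/2 \<and> m 3 * g33 = (1 - m 3)/2"
    unfolding set3 moment_def g11_def g22_def g33_def power2_norm_eq_inner by simp
  show ?thesis
  proof
    assume hc: "hemisphere_center m a"
    have D12: "g11 - 2 * g12 + g22 = (1/m 1 + 1/m 2)/2"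
      unfolding g11_def g12_def g22_def
      by (rule edge[OF m(1,2), of "a 1" "a 2" "m 3" "a 3"], rule center_val[OF hc adm]) (use m in simp_all)
    have D13: "g11 - 2 * g13 + g33 = (1/m 1 + 1/m 3)/2"
    proof -
      have "a 1 \<bullet> a 1 - 2 * (a 1 \<bullet> a 3) + a 3 \<bullet> a 3 = (1/m 1 + 1/m 3)/2"
      proof (rule edge[OF m(1,3), of "a 1" "a 3" "m 2" "a 2"])
        fix c assume "m 1 * (c / m 1)\<^sup>2 + m 3 * (- c / m 3)\<^sup>2 = 1"
        then have "norm ((m 1 * (c / m 1)) *\<^sub>R a 1 + (m 2 * 0) *\<^sub>R a 2 + (m 3 * (- c / m 3)) *\<^sub>R a 3) = sqrt 2 / 2"
          by (intro center_val[OF hc adm]) (use m in simp_all)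
        then show "norm ((m 1 * (c / m 1)) *\<^sub>R a 1 + (m 3 * (- c / m 3)) *\<^sub>R a 3 + (m 2 * 0) *\<^sub>R a 2) = sqrt 2 / 2"
          by simp
      qed
      then show ?thesis unfolding g11_def g13_def g33_def .
    qed
    have D23: "g22 - 2 * g23 + g33 = (1/m 2 + 1/m 3)/2"
    proof -
      have "a 2 \<bullet> a 2 - 2 * (a 2 \<bullet> a 3) + a 3 \<bullet> a 3 = (1/m 2 + 1/m 3)/2"
      proof (rule edge[OF m(2,3), of "a 2" "a 3" "m 1" "a 1"])
        fix c assume "m 2 * (c / m 2)\<^sup>2 + m 3 * (- c / m 3)\<^sup>2 = 1"
        then have "norm ((m 1 * 0) *\<^sub>R a 1 + (m 2 * (c / m 2)) *\<^sub>R a 2 + (m 3 * (- c / m 3)) *\<^sub>R a 3) = sqrt 2 / 2"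
          by (intro center_val[OF hc adm]) (use m in simp_all)
        then show "norm ((m 2 * (c / m 2)) *\<^sub>R a 2 + (m 3 * (- c / m 3)) *\<^sub>R a 3 + (m 1 * 0) *\<^sub>R a 1) = sqrt 2 / 2"
          by simp
      qed
      then show ?thesis unfolding g22_def g23_def g33_def .
    qed
    have F1: "m 2 * (g11 - 2 * g12 + g22) + m 3 * (g11 - 2 * g13 + g33) = g11 + 1"
    proof -
      have "m 2 * (g11 - 2 * g12 + g22) + m 3 * (g11 - 2 * g13 + g33)
          = (m 2 + m 3) * g11 - 2 * (m 2 * g12 + m 3 * g13) + (m 2 * g22 + m 3 * g33)"
        by (simp add: algebra_simps)
      also have "\<dots> = (1 - m 1) * g11 - 2 * (- (m 1 * g11)) + (1 - m 1 * g11)"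
        using E1 Iq m(4) by (smt (verit))
      finally show ?thesis by (simp add: algebra_simps)
    qed
    have F2: "m 1 * (g11 - 2 * g12 + g22) + m 3 * (g22 - 2 * g23 + g33) = g22 + 1"
    proof -
      have "m 1 * (g11 - 2 * g12 + g22) + m 3 * (g22 - 2 * g23 + g33)
          = (m 1 + m 3) * g22 - 2 * (m 1 * g12 + m 3 * g23) + (m 1 * g11 + m 3 * g33)"
        by (simp add: algebra_simps)
      also have "\<dots> = (1 - m 2) * g22 - 2 * (- (m 2 * g22)) + (1 - m 2 * g22)"
        using E2 Iq m(4) by (smt (verit))
      finally show ?thesis by (simp add: algebra_simps)
    qed
    have F3: "m 1 * (g11 - 2 * g13 + g33) + m 2 * (g22 - 2 * g23 + g33) = g33 + 1"
    proof -
      have "m 1 * (g11 - 2 * g13 + g33) + m 2 * (g22 - 2 * g23 + g33)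
          = (m 1 + m 2) * g33 - 2 * (m 1 * g13 + m 2 * g23) + (m 1 * g11 + m 2 * g22)"
        by (simp add: algebra_simps)
      also have "\<dots> = (1 - m 3) * g33 - 2 * (- (m 3 * g33)) + (1 - m 3 * g33)"
        using E3 Iq m(4) by (smt (verit))
      finally show ?thesis by (simp add: algebra_simps)
    qed
    have "m 1 * g11 = (1 - m 1)/2"
    proof -
      have "g11 = m 2 * ((1/m 1 + 1/m 2)/2) + m 3 * ((1/m 1 + 1/m 3)/2) - 1"
        using F1 D12 D13 by simp
      then show ?thesis using solve_g[of "m 1" "m 2" "m 3"] m by simp
    qed
    moreover have "m 2 * g22 = (1 - m 2)/2"
    proof -
      have "g22 = m 1 * ((1/m 1 + 1/m 2)/2) + m 3 * ((1/m 2 + 1/m 3)/2) - 1"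
        using F2 D12 D23 by simp
      then show ?thesis using solve_g[of "m 2" "m 1" "m 3"] m by (simp add: algebra_simps)
    qed
    moreover have "m 3 * g33 = (1 - m 3)/2"
    proof -
      have "g33 = m 1 * ((1/m 1 + 1/m 3)/2) + m 2 * ((1/m 2 + 1/m 3)/2) - 1"
        using F3 D13 D23 by simp
      then show ?thesis using solve_g[of "m 3" "m 1" "m 2"] m by (simp add: algebra_simps)
    qed
    ultimately show "\<forall>j\<in>{1..3}. moment m a j = (1 - m j)/2" using momeq by blast
  next
    assume "\<forall>j\<in>{1..3}. moment m a j = (1 - m j)/2"
    then have M1: "m 1 * g11 = (1 - m 1)/2" and M2: "m 2 * g22 = (1 - m 2)/2"
      and M3: "m 3 * g33 = (1 - m 3)/2" using momeq by auto
    define h12 where "h12 = g12 + 1/2"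
    define h13 where "h13 = g13 + 1/2"
    define h23 where "h23 = g23 + 1/2"
    have A: "m 2 * h12 + m 3 * h13 = 0" using E1 M1 m(4) unfolding h12_def h13_def by (simp add: algebra_simps)
    have B: "m 1 * h12 + m 3 * h23 = 0" using E2 M2 m(4) unfolding h12_def h23_def by (simp add: algebra_simps)
    have C: "m 1 * h13 + m 2 * h23 = 0" using E3 M3 m(4) unfolding h13_def h23_def by (simp add: algebra_simps)
    have "2 * m 1 * m 2 * h12 = m 1 * (m 2 * h12 + m 3 * h13) + m 2 * (m 1 * h12 + m 3 * h23) - m 3 * (m 1 * h13 + m 2 * h23)"
      by (simp add: algebra_simps)
    then have "h12 = 0" using A B C m by simp
    then have "h13 = 0" "h23 = 0" using A B m by auto
    then have G12: "g12 = -1/2" and G13: "g13 = -1/2" and G23: "g23 = -1/2"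
      using \<open>h12 = 0\<close> unfolding h12_def h13_def h23_def by auto
    have key: "(norm ((m 1 * t1) *\<^sub>R a 1 + (m 2 * t2) *\<^sub>R a 2 + (m 3 * t3) *\<^sub>R a 3))\<^sup>2 =
       (m 1 * t1^2 + m 2 * t2^2 + m 3 * t3^2)/2 - (m 1 * t1 + m 2 * t2 + m 3 * t3)^2/2" for t1 t2 t3
    proof -
      have "(norm ((m 1 * t1) *\<^sub>R a 1 + (m 2 * t2) *\<^sub>R a 2 + (m 3 * t3) *\<^sub>R a 3))\<^sup>2 =
        m 1 * t1^2 * (m 1 * g11) + m 2 * t2^2 * (m 2 * g22) + m 3 * t3^2 * (m 3 * g33)
        + 2 * (m 1 * t1) * (m 2 * t2) * g12 + 2 * (m 1 * t1) * (m 3 * t3) * g13 + 2 * (m 2 * t2) * (m 3 * t3) * g23"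
        unfolding nsq g11_def g22_def g33_def g12_def g13_def g23_def by (simp add: power2_eq_square algebra_simps)
      also have "\<dots> = (m 1 * t1^2 + m 2 * t2^2 + m 3 * t3^2)/2 - (m 1 * t1 + m 2 * t2 + m 3 * t3)^2/2"
        unfolding M1 M2 M3 G12 G13 G23 by (simp add: power2_eq_square field_simps)
      finally show ?thesis .
    qed
    show "hemisphere_center m a"
      unfolding hemisphere_center_def
    proof (intro conjI allI impI)
      show "total_moment m a = 1" by fact
      fix b assume hb: "collinear_m_triangle m b \<and> total_moment m b = 1"
      then obtain u where "\<forall>j\<in>{1..3}. \<exists>t. b j = t *\<^sub>R u" unfolding collinear_m_triangle_def by blast
      then obtain t where bt: "\<forall>j\<in>{1..3}. b j = t j *\<^sub>R u" by metis
      have b1: "b 1 = t 1 *\<^sub>R u" and b2: "b 2 = t 2 *\<^sub>R u" and b3: "b 3 = t 3 *\<^sub>R u" using bt by auto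
      have T: "(m 1 * (t 1)^2 + m 2 * (t 2)^2 + m 3 * (t 3)^2) * (norm u)^2 = 1"
        using hb unfolding total_moment_def sum3 moment_def b1 b2 b3 by (simp add: power_mult_distrib algebra_simps)
      then have "u \<noteq> 0" by auto
      moreover have "(m 1 * t 1 + m 2 * t 2 + m 3 * t 3) *\<^sub>R u = 0"
        using hb unfolding collinear_m_triangle_def m_triangle_def sum3 b1 b2 b3 by (simp add: scaleR_add_left)
      ultimately have S: "m 1 * t 1 + m 2 * t 2 + m 3 * t 3 = 0" by simp
      define N where "N = norm ((m 1 * t 1) *\<^sub>R a 1 + (m 2 * t 2) *\<^sub>R a 2 + (m 3 * t 3) *\<^sub>R a 3)"
      have "(N * norm u)^2 = 1/2"
        unfolding N_def power_mult_distrib key S using T by (simp add: algebra_simps)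
      then have "N * norm u = sqrt 2 / 2" by (intro sqrt_half) (simp_all add: N_def)
      moreover have "shape_dist m a b = arccos (N * norm u)" unfolding N_def by (rule dist_coll[OF bt])
      moreover have "arccos (sqrt 2 / 2) = pi / 4"
        using arccos_cos[of "pi/4"] by (simp add: cos_45)
      ultimately show "shape_dist m a b = pi / 4" by metis
    qed
  qed
qed

lemma exist_tri:
  assumes adm: "admissible_masses m"
  obtains a :: "nat \<Rightarrow> real^3" where "m_triangle m a" "\<forall>j\<in>{1..3}. a j \<bullet> axis 3 1 = 0"
    "cross3 (a 1) (a 2) \<bullet> axis 3 1 > 0" "\<forall>j\<in>{1..3}. moment m a j = (1 - m j)/2"
proof -
  have m: "m 1 > 0" "m 2 > 0" "m 3 > 0" "m 1 + m 2 + m 3 = 1" using adm3[OF adm] by auto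
  have m1: "1 - m 1 > 0" using m by simp
  define x where "x = sqrt ((1 - m 1)/(2 * m 1))"
  define y where "y = sqrt (m 3/(2 * m 2 * (1 - m 1)))"
  have x2: "x^2 = (1 - m 1)/(2 * m 1)" unfolding x_def using m m1 by simp
  have y2: "y^2 = m 3/(2 * m 2 * (1 - m 1))" unfolding y_def using m m1 by simp
  have xp: "x > 0" unfolding x_def using m m1 by simp
  have yp: "y > 0" unfolding y_def using m m1 by simp
  define a1 :: "real^3" where "a1 = vector [x, 0, 0]"
  define a2 :: "real^3" where "a2 = vector [-1/(2*x), y, 0]"
  define a3 :: "real^3" where "a3 = (- 1 / m 3) *\<^sub>R (m 1 *\<^sub>R a1 + m 2 *\<^sub>R a2)"
  define a where "a = (\<lambda>j::nat. if j = 1 then a1 else if j = 2 then a2 else a3)"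
  have g11: "a1 \<bullet> a1 = x^2" unfolding a1_def by (simp add: inner_vec_def sum_3 power2_eq_square)
  have g12: "a1 \<bullet> a2 = -1/2" unfolding a1_def a2_def using xp by (simp add: inner_vec_def sum_3)
  have g22: "a2 \<bullet> a2 = 1/(4*x^2) + y^2" unfolding a2_def by (simp add: inner_vec_def sum_3 power2_eq_square)
  have E: "m 1 *\<^sub>R a1 + m 2 *\<^sub>R a2 + m 3 *\<^sub>R a3 = 0" unfolding a3_def using m by simp
  have "m_triangle m a" unfolding m_triangle_def sum3 a_def using E by simp
  moreover have "\<forall>j\<in>{1..3}. a j \<bullet> axis 3 1 = 0"
    unfolding a_def a3_def a1_def a2_def by (auto simp: inner_axis)
  moreover have "cross3 (a 1) (a 2) \<bullet> axis 3 1 > 0"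
    unfolding a_def a1_def a2_def using xp yp by (simp add: inner_axis cross3_def)
  moreover have "\<forall>j\<in>{1..3}. moment m a j = (1 - m j)/2"
  proof -
    have M1: "m 1 * (a1 \<bullet> a1) = (1 - m 1)/2" unfolding g11 x2 using m by simp
    have M2: "m 2 * (a2 \<bullet> a2) = (1 - m 2)/2"
    proof -
      have "m 2 * (a2 \<bullet> a2) = m 2 * (m 1 / (2 * (1 - m 1))) + m 3 / (2 * (1 - m 1))"
      proof -
        have "1/(4*x^2) = m 1/(2*(1 - m 1))" unfolding x2 using m m1 by (simp add: field_simps)
        moreover have "m 2 * y^2 = m 3/(2*(1 - m 1))" unfolding y2 using m m1 by (simp add: field_simps)
        ultimately show ?thesis unfolding g22 by (simp add: distrib_left)
      qed
      also have "\<dots> = (m 1 * m 2 + m 3) / (2 * (1 - m 1))" by (simp add: add_divide_distrib mult.commute)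
      also have "m 1 * m 2 + m 3 = (1 - m 2) * (1 - m 1)" using m(4) by (simp add: algebra_simps)
      finally have "m 2 * (a2 \<bullet> a2) = (1 - m 2) * (1 - m 1) / (2 * (1 - m 1))" .
      moreover have "(1 - m 2) * (1 - m 1) / (2 * (1 - m 1)) = (1 - m 2) / 2"
        using m1 by (intro nonzero_mult_divide_mult_cancel_right) simp
      ultimately show ?thesis by simp
    qed
    have M3: "m 3 * (a3 \<bullet> a3) = (1 - m 3)/2"
    proof -
      have "a3 \<bullet> a3 = (1 / m 3)^2 * ((m 1 *\<^sub>R a1 + m 2 *\<^sub>R a2) \<bullet> (m 1 *\<^sub>R a1 + m 2 *\<^sub>R a2))"
        unfolding a3_def by (simp add: power2_eq_square)
      also have "(m 1 *\<^sub>R a1 + m 2 *\<^sub>R a2) \<bullet> (m 1 *\<^sub>R a1 + m 2 *\<^sub>R a2)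
          = m 1 * (m 1 * (a1 \<bullet> a1)) + 2 * m 1 * m 2 * (a1 \<bullet> a2) + m 2 * (m 2 * (a2 \<bullet> a2))"
        by (simp add: inner_add_left inner_add_right inner_commute[of a2 a1] algebra_simps)
      also have "\<dots> = m 1 * ((1 - m 1)/2) - m 1 * m 2 + m 2 * ((1 - m 2)/2)"
        unfolding M1 M2 g12 by simp
      also have "\<dots> = m 3 * (1 - m 3) / 2"
      proof -
        have h: "m 3 = 1 - m 1 - m 2" using m(4) by simp
        show ?thesis by (simp only: h) (simp add: field_simps)
      qed
      finally have h: "a3 \<bullet> a3 = (1 / m 3)^2 * (m 3 * (1 - m 3) / 2)" .
      have "(1 / m 3)^2 * (m 3 * (1 - m 3) / 2) = (1 - m 3) / (2 * m 3)"
        using m(3) by (simp add: power2_eq_square field_simps)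
      then show ?thesis unfolding h using m(3) by simp
    qed
    have set3: "{1..3::nat} = {1,2,3}" by auto
    show ?thesis unfolding set3 moment_def power2_norm_eq_inner a_def using M1 M2 M3 by simp
  qed
  ultimately show ?thesis using that by blast
qed

theorem mainTheorem14:
  fixes m :: "nat \<Rightarrow> real"
  assumes "admissible_masses m"
  shows "(\<exists>a n. pos_oriented m a n \<and> (\<forall>j\<in>{1..3}. moment m a j = (1 - m j) / 2))
       \<and> (\<forall>a n. pos_oriented m a n \<and> total_moment m a = 1 \<longrightarrow>
              (hemisphere_center m a \<longleftrightarrow> (\<forall>j\<in>{1..3}. moment m a j = (1 - m j) / 2)))
       \<and> (\<exists>a n. neg_oriented m a n \<and> (\<forall>j\<in>{1..3}. moment m a j = (1 - m j) / 2))
       \<and> (\<forall>a n. neg_oriented m a n \<and> total_moment m a = 1 \<longrightarrow>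
              (hemisphere_center m a \<longleftrightarrow> (\<forall>j\<in>{1..3}. moment m a j = (1 - m j) / 2)))"
proof -
  obtain a :: "nat \<Rightarrow> real^3" where a: "m_triangle m a" "\<forall>j\<in>{1..3}. a j \<bullet> axis 3 1 = 0"
    "cross3 (a 1) (a 2) \<bullet> axis 3 1 > 0" "\<forall>j\<in>{1..3}. moment m a j = (1 - m j)/2"
    using exist_tri[OF assms] by blast
  have n1: "norm (axis 3 1 :: real^3) = 1" by simp
  have n2: "norm (- axis 3 1 :: real^3) = 1" by simp
  have "pos_oriented m a (axis 3 1)"
    unfolding pos_oriented_def oriented_m_triangle_def using a n1 by blast
  moreover have "neg_oriented m a (- axis 3 1)"
    unfolding neg_oriented_def oriented_m_triangle_def using a n2 by (simp add: inner_minus_right)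
  ultimately show ?thesis
  proof (intro conjI)
    show "\<exists>a n. pos_oriented m a n \<and> (\<forall>j\<in>{1..3}. moment m a j = (1 - m j) / 2)"
      using \<open>pos_oriented m a (axis 3 1)\<close> a(4) by blast
    show "\<exists>a n. neg_oriented m a n \<and> (\<forall>j\<in>{1..3}. moment m a j = (1 - m j) / 2)"
      using \<open>neg_oriented m a (- axis 3 1)\<close> a(4) by blast
    show "\<forall>a n. pos_oriented m a n \<and> total_moment m a = 1 \<longrightarrow>
              (hemisphere_center m a \<longleftrightarrow> (\<forall>j\<in>{1..3}. moment m a j = (1 - m j) / 2))"
    proof (intro allI impI)
      fix b n assume h: "pos_oriented m b n \<and> total_moment m b = 1"
      then have "m_triangle m b" unfolding pos_oriented_def oriented_m_triangle_def by simp
      then show "hemisphere_center m b \<longleftrightarrow> (\<forall>j\<in>{1..3}. moment m b j = (1 - m j) / 2)"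
        using center_iff[OF assms] h by simp
    qed
    show "\<forall>a n. neg_oriented m a n \<and> total_moment m a = 1 \<longrightarrow>
              (hemisphere_center m a \<longleftrightarrow> (\<forall>j\<in>{1..3}. moment m a j = (1 - m j) / 2))"
    proof (intro allI impI)
      fix b n assume h: "neg_oriented m b n \<and> total_moment m b = 1"
      then have "m_triangle m b" unfolding neg_oriented_def oriented_m_triangle_def by simp
      then show "hemisphere_center m b \<longleftrightarrow> (\<forall>j\<in>{1..3}. moment m b j = (1 - m j) / 2)"
        using center_iff[OF assms] h by simp
    qed
  qed
qed

end
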